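(* Let $(\varphi_n)_{n\ge 0}$ be vectors in $\mathbb{R}^d$ and set $r_0=1$, $r_n=1+\sum_{i=1}^n\|\varphi_i\|^2$ for $n\ge1$. Define $A_n=\varphi_n\varphi_n^\top/r_n$ and the transition matrices $\Phi(i,i)=I$, $\Phi(n+1,i)=(I-A_n)\Phi(n,i)$ for $n\ge i$. Let $(t_k)_{k\ge0}$ be a strictly increasing sequence of integers with $t_0\ge 1$. Set $$S_{t_kt_{k-1}}=\sum_{i=t_{k-1}}^{t_k-1}\varphi_i\varphi_i^\top,\qquad D_k=r_{t_k-1}\left(\log r_{t_k-1}-\log r_{t_{k-1}-1}\right)+r_{t_{k-1}-1}.$$ If $\sum_{k=1}^\infty \lambda_{\min}(S_{t_kt_{k-1}})/D_k=\infty$, then $\Phi(n,0)\to0$ as $n\to\infty$.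
   Context: $\log$ is the natural logarithm, $\|\cdot\|$ the Euclidean norm, $\lambda_{\min}$ the smallest eigenvalue of a symmetric matrix. *)

theory Defs
  imports "HOL-Analysis.Analysis"
begin

definition outer :: "real^'d \<Rightarrow> real^'d \<Rightarrow> real^'d^'d" where
  "outer u v = (\<chi> i j. u $ i * v $ j)"

definition lambda_min :: "real^'d^'d \<Rightarrow> real" where
  "lambda_min M = Min {c. \<exists>v. v \<noteq> 0 \<and> M *v v = c *\<^sub>R v}"

definition rr :: "(nat \<Rightarrow> real^'d) \<Rightarrow> nat \<Rightarrow> real" where
  "rr \<phi> n = 1 + (\<Sum>i=1..n. (norm (\<phi> i))^2)"

definition AA :: "(nat \<Rightarrow> real^'d) \<Rightarrow> nat \<Rightarrow> real^'d^'d" where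
  "AA \<phi> n = (1 / rr \<phi> n) *\<^sub>R outer (\<phi> n) (\<phi> n)"

text \<open>trans_from phi i k = Phi(i+k, i).\<close>
fun trans_from :: "(nat \<Rightarrow> real^'d) \<Rightarrow> nat \<Rightarrow> nat \<Rightarrow> real^'d^'d" where
  "trans_from \<phi> i 0 = mat 1"
| "trans_from \<phi> i (Suc k) = (mat 1 - AA \<phi> (i + k)) ** trans_from \<phi> i k"

definition Phi :: "(nat \<Rightarrow> real^'d) \<Rightarrow> nat \<Rightarrow> nat \<Rightarrow> real^'d^'d" where
  "Phi \<phi> n i = trans_from \<phi> i (n - i)"

definition SS :: "(nat \<Rightarrow> real^'d) \<Rightarrow> (nat \<Rightarrow> nat) \<Rightarrow> nat \<Rightarrow> real^'d^'d" where
  "SS \<phi> t k = (\<Sum>i\<in>{t (k - 1)..<t k}. outer (\<phi> i) (\<phi> i))"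

definition DD :: "(nat \<Rightarrow> real^'d) \<Rightarrow> (nat \<Rightarrow> nat) \<Rightarrow> nat \<Rightarrow> real" where
  "DD \<phi> t k = rr \<phi> (t k - 1) * (ln (rr \<phi> (t k - 1)) - ln (rr \<phi> (t (k - 1) - 1)))
              + rr \<phi> (t (k - 1) - 1)"

end

theory Submission
  imports Defs
begin

lemma outer_mult: "outer u u *v y = (u \<bullet> y) *\<^sub>R (u::real^'d)"
  by (simp add: vec_eq_iff outer_def matrix_vector_mult_def inner_vec_def sum_distrib_left mult.commute mult.left_commute)

lemma sum_mult_vec: "finite I \<Longrightarrow> (\<Sum>i\<in>I. M i) *v (y::real^'d) = (\<Sum>i\<in>I. M i *v y)"
  by (induction I rule: finite_induct) (auto simp: matrix_vector_mult_add_rdistrib)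

lemma gram_mult: "finite I \<Longrightarrow> (\<Sum>i\<in>I. outer (f i) (f i)) *v (y::real^'d) = (\<Sum>i\<in>I. (f i \<bullet> y) *\<^sub>R f i)"
  by (simp add: sum_mult_vec outer_mult)

lemma gram_quad: "finite I \<Longrightarrow> w \<bullet> ((\<Sum>i\<in>I. outer (f i) (f i)) *v (y::real^'d)) = (\<Sum>i\<in>I. (f i \<bullet> y) * (f i \<bullet> w))"
  by (auto simp: gram_mult inner_sum_right inner_commute intro!: sum.cong)

lemma eig_finite:
  fixes M :: "real^'d^'d"
  assumes sym: "\<And>v w. v \<bullet> (M *v w) = w \<bullet> (M *v v)"
  shows "finite {c. \<exists>v. v \<noteq> 0 \<and> M *v v = c *\<^sub>R v}"
proof -
  define E where "E = {c. \<exists>v. v \<noteq> 0 \<and> M *v v = c *\<^sub>R v}"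
  define g where "g c = (SOME v. v \<noteq> 0 \<and> M *v v = c *\<^sub>R v)" for c
  have g: "g c \<noteq> 0 \<and> M *v g c = c *\<^sub>R g c" if "c \<in> E" for c
    using that unfolding E_def g_def by (metis (mono_tags, lifting) mem_Collect_eq someI_ex)
  have orth: "g c \<bullet> g c' = 0" if "c \<in> E" "c' \<in> E" "c \<noteq> c'" for c c'
  proof -
    have "c * (g c \<bullet> g c') = g c' \<bullet> (M *v g c)" using g[OF that(1)] by (simp add: inner_commute)
    also have "\<dots> = g c \<bullet> (M *v g c')" by (rule sym)
    also have "\<dots> = c' * (g c \<bullet> g c')" using g[OF that(2)] by simp
    finally show ?thesis using that(3) by auto
  qed
  have inj: "inj_on g E"
  proof (rule inj_onI)
    fix c c' assume "c \<in> E" "c' \<in> E" "g c = g c'"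
    then show "c = c'" using orth[of c c'] g[of c] by auto
  qed
  have "pairwise orthogonal (g ` E)"
    unfolding pairwise_def orthogonal_def using orth by blast
  moreover have "0 \<notin> g ` E" using g by auto
  ultimately have "independent (g ` E)" by (rule pairwise_orthogonal_independent)
  then have "finite (g ` E)" by (rule independent_imp_finite)
  then have "finite E" using inj finite_imageD by blast
  then show ?thesis unfolding E_def .
qed

lemma rayleigh:
  fixes M :: "real^'d^'d"
  assumes sym: "\<And>v w. v \<bullet> (M *v w) = w \<bullet> (M *v v)"
  shows "\<exists>c v0. v0 \<noteq> 0 \<and> M *v v0 = c *\<^sub>R v0 \<and> (\<forall>v. c * (norm v)^2 \<le> v \<bullet> (M *v v))"
proof -
  define q where "q v = v \<bullet> (M *v v)" for v
  have cont: "continuous_on (sphere 0 1) q" unfolding q_def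
    by (intro continuous_intros)
  have ne: "sphere (0::real^'d) 1 \<noteq> {}"
    using vector_choose_size[of 1] by auto
  obtain v0 where v0: "v0 \<in> sphere 0 1" "\<And>y. y \<in> sphere 0 1 \<Longrightarrow> q v0 \<le> q y"
    using continuous_attains_inf[OF compact_sphere ne cont] by blast
  define c where "c = q v0"
  have nv0: "norm v0 = 1" using v0(1) by simp
  have qscale: "q (a *\<^sub>R v) = a^2 * q v" for a v
    unfolding q_def by (simp add: matrix_vector_mult_scaleR power2_eq_square)
  have lb: "c * (norm v)^2 \<le> q v" for v
  proof (cases "v = 0")
    case True then show ?thesis by (simp add: q_def)
  next
    case False
    then have "(1 / norm v) *\<^sub>R v \<in> sphere 0 1" by simp
    then have "c \<le> q ((1 / norm v) *\<^sub>R v)" using v0(2) c_def by blast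
    also have "\<dots> = q v / (norm v)^2" by (simp add: qscale power_divide)
    finally show ?thesis using False by (simp add: field_simps)
  qed
  define u where "u = M *v v0 - c *\<^sub>R v0"
  have "u = 0"
  proof (rule ccontr)
    assume "u \<noteq> 0"
    define n where "n = (norm u)^2"
    define K where "K = q u - c * (norm u)^2"
    have n: "n > 0" using \<open>u \<noteq> 0\<close> by (simp add: n_def)
    have key: "q (v0 + e *\<^sub>R u) - c * (norm (v0 + e *\<^sub>R u))^2 = 2 * e * n + e^2 * K" for e
    proof -
      have "q (v0 + e *\<^sub>R u) = q v0 + 2 * e * (u \<bullet> (M *v v0)) + e^2 * q u"
        unfolding q_def using sym[of v0 u]
        by (simp add: matrix_vector_right_distrib matrix_vector_mult_scaleR inner_add_left inner_add_right power2_eq_square algebra_simps)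
      moreover have "(norm (v0 + e *\<^sub>R u))^2 = 1 + 2 * e * (u \<bullet> v0) + e^2 * (norm u)^2"
      proof -
        have "(norm (v0 + e *\<^sub>R u))^2 = v0 \<bullet> v0 + 2 * e * (u \<bullet> v0) + e^2 * (u \<bullet> u)"
          unfolding power2_norm_eq_inner by (simp add: inner_add_left inner_add_right inner_commute power2_eq_square algebra_simps)
        then show ?thesis using nv0 by (simp add: dot_square_norm)
      qed
      moreover have "u \<bullet> (M *v v0) - c * (u \<bullet> v0) = n"
        unfolding n_def u_def power2_norm_eq_inner by (simp add: inner_diff_left inner_diff_right algebra_simps)
      ultimately show ?thesis unfolding K_def c_def by (simp add: algebra_simps)
    qed
    define m where "m = \<bar>K\<bar> + 1"
    define e where "e = - n / m"
    have m: "m \<ge> 1" by (simp add: m_def)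
    have "2 * e * n + e^2 * K < 0"
    proof -
      have "e^2 * K \<le> e^2 * (m - 1)" by (simp add: m_def mult_left_mono)
      moreover have "2 * e * n + e^2 * (m - 1) = -(n^2 * (m + 1) / m^2)"
        using m by (simp add: e_def field_simps power2_eq_square)
      moreover have "-(n^2 * (m + 1) / m^2) < 0" using n m by (simp add: divide_neg_pos)
      ultimately show ?thesis by linarith
    qed
    moreover have "0 \<le> q (v0 + e *\<^sub>R u) - c * (norm (v0 + e *\<^sub>R u))^2" using lb[of "v0 + e *\<^sub>R u"] by simp
    ultimately show False using key[of e] by linarith
  qed
  then have "M *v v0 = c *\<^sub>R v0" by (simp add: u_def)
  moreover have "v0 \<noteq> 0" using nv0 by auto
  ultimately show ?thesis using lb unfolding q_def by blast
qed

lemma lambda_min_le: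
  fixes M :: "real^'d^'d"
  assumes sym: "\<And>v w. v \<bullet> (M *v w) = w \<bullet> (M *v v)"
  shows "lambda_min M * (norm v)^2 \<le> v \<bullet> (M *v v)"
proof -
  obtain c v0 where c: "v0 \<noteq> 0" "M *v v0 = c *\<^sub>R v0" "\<And>v. c * (norm v)^2 \<le> v \<bullet> (M *v v)"
    using rayleigh[OF sym] by blast
  have "lambda_min M \<le> c" unfolding lambda_min_def
    using eig_finite[OF sym] c(1,2) by (intro Min_le) auto
  then have "lambda_min M * (norm v)^2 \<le> c * (norm v)^2" by (simp add: mult_right_mono)
  with c(3)[of v] show ?thesis by linarith
qed

lemma SS_sym: "v \<bullet> (SS \<phi> t k *v w) = w \<bullet> (SS \<phi> t k *v v)"
  unfolding SS_def by (simp add: gram_quad mult.commute)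

lemma SS_quad: "v \<bullet> (SS \<phi> t k *v v) = (\<Sum>i\<in>{t (k - 1)..<t k}. (\<phi> i \<bullet> v)^2)"
  unfolding SS_def by (simp add: gram_quad power2_eq_square)

lemma rr_ge1: "rr \<phi> n \<ge> 1"
  unfolding rr_def by (simp add: sum_nonneg)

lemma rr_Suc: "rr \<phi> (Suc n) = rr \<phi> n + (norm (\<phi> (Suc n)))^2"
  unfolding rr_def by simp

lemma rr_prev: "j \<ge> 1 \<Longrightarrow> rr \<phi> j = rr \<phi> (j - 1) + (norm (\<phi> j))^2"
  using rr_Suc[of \<phi> "j - 1"] by simp

lemma rr_mono: "m \<le> n \<Longrightarrow> rr \<phi> m \<le> rr \<phi> n"
proof (induction n rule: dec_induct)
  case (step n) then show ?case using rr_Suc[of \<phi> n] zero_le_power2[of "norm (\<phi> (Suc n))"] by linarith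
qed simp

lemma sum_norm_rr: assumes "1 \<le> a" "a \<le> b" shows "(\<Sum>j\<in>{a..<b}. (norm (\<phi> j))^2) = rr \<phi> (b - 1) - rr \<phi> (a - 1)"
  using assms(2) proof (induction b rule: dec_induct)
  case (step n)
  then show ?case using rr_prev[of n \<phi>] assms(1) by simp
qed simp

lemma sum_log_rr: assumes "1 \<le> a" "a \<le> b" shows "(\<Sum>j\<in>{a..<b}. (norm (\<phi> j))^2 / rr \<phi> j) \<le> ln (rr \<phi> (b - 1)) - ln (rr \<phi> (a - 1))"
  using assms(2) proof (induction b rule: dec_induct)
  case (step n)
  have r1: "rr \<phi> n \<ge> 1" "rr \<phi> (n - 1) \<ge> 1" by (rule rr_ge1)+
  have "ln (rr \<phi> (n - 1) / rr \<phi> n) \<le> rr \<phi> (n - 1) / rr \<phi> n - 1"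
    using r1 by (intro ln_le_minus_one) auto
  then have "(norm (\<phi> n))^2 / rr \<phi> n \<le> ln (rr \<phi> n) - ln (rr \<phi> (n - 1))"
    using r1 rr_prev[of n \<phi>] step(1,2) assms(1) by (simp add: ln_div field_simps)
  then show ?case using step by simp
qed simp

lemma scaleR_mv: "(c *\<^sub>R A) *v (x::real^'d) = c *\<^sub>R (A *v x)"
  by (simp add: vec_eq_iff matrix_vector_mult_def sum_distrib_left mult.assoc)

lemma trans_rec: "trans_from \<phi> 0 (Suc n) *v v = trans_from \<phi> 0 n *v v - ((\<phi> n \<bullet> (trans_from \<phi> 0 n *v v)) / rr \<phi> n) *\<^sub>R \<phi> n"
  by (simp add: matrix_vector_mul_assoc[symmetric] matrix_vector_mult_diff_rdistrib AA_def
      scaleR_mv outer_mult)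

lemma energy:
  assumes xrec: "\<And>n. x (Suc n) = x n - ((\<phi> n \<bullet> x n) / rr \<phi> n) *\<^sub>R \<phi> n"
    and n: "n \<ge> 1"
  shows "(norm (x (Suc n)))^2 \<le> (norm (x n))^2 - (\<phi> n \<bullet> x n)^2 / rr \<phi> n"
proof -
  define p where "p = \<phi> n \<bullet> x n"
  define r where "r = rr \<phi> n"
  define f where "f = (norm (\<phi> n))^2"
  have r1: "r \<ge> 1" unfolding r_def by (rule rr_ge1)
  have fr: "f \<le> r" using rr_prev[OF n, of \<phi>] rr_ge1[of \<phi> "n - 1"] unfolding f_def r_def by linarith
  have eq: "(norm (x (Suc n)))^2 = (norm (x n))^2 - 2 * p^2 / r + p^2 * f / r^2"
    unfolding xrec power2_norm_eq_inner p_def r_def f_def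
    by (simp add: inner_diff_left inner_diff_right inner_commute power2_eq_square field_simps)
  have "p^2 * f / r^2 = (p^2 / r) * (f / r)" by (simp add: power2_eq_square)
  also have "\<dots> \<le> (p^2 / r) * 1" using fr r1 by (intro mult_left_mono) auto
  finally show ?thesis using eq unfolding p_def[symmetric] r_def[symmetric] by simp
qed

lemma energy_sum:
  assumes xrec: "\<And>n. x (Suc n) = x n - ((\<phi> n \<bullet> x n) / rr \<phi> n) *\<^sub>R \<phi> n"
    and a: "1 \<le> a" and ab: "a \<le> b"
  shows "(\<Sum>j\<in>{a..<b}. (\<phi> j \<bullet> x j)^2 / rr \<phi> j) \<le> (norm (x a))^2 - (norm (x b))^2"
  using ab
proof (induction b rule: dec_induct)
  case (step n)
  then show ?case using energy[OF xrec, of n] a by simp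
qed simp

lemma telescope:
  assumes xrec: "\<And>n. x (Suc n) = x n - ((\<phi> n \<bullet> x n) / rr \<phi> n) *\<^sub>R \<phi> n"
    and ab: "a \<le> b"
  shows "x a - x b = (\<Sum>j\<in>{a..<b}. ((\<phi> j \<bullet> x j) / rr \<phi> j) *\<^sub>R \<phi> j)"
  using ab
proof (induction b rule: dec_induct)
  case (step n)
  then show ?case using xrec[of n] by (simp add: algebra_simps)
qed simp

lemma block:
  assumes xrec: "\<And>n. x (Suc n) = x n - ((\<phi> n \<bullet> x n) / rr \<phi> n) *\<^sub>R \<phi> n"
    and a: "1 \<le> a" and ab: "a \<le> b"
  shows "(\<Sum>i\<in>{a..<b}. (\<phi> i \<bullet> x b)^2) \<le> 4 * (rr \<phi> (b - 1) * (ln (rr \<phi> (b - 1)) - ln (rr \<phi> (a - 1))) + rr \<phi> (a - 1)) * (\<Sum>j\<in>{a..<b}. (\<phi> j \<bullet> x j)^2 / rr \<phi> j)"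
proof -
  define p where "p j = \<phi> j \<bullet> x j" for j
  define e where "e j = (p j)^2 / rr \<phi> j" for j
  define E where "E = (\<Sum>j\<in>{a..<b}. e j)"
  define Lg where "Lg = (\<Sum>j\<in>{a..<b}. (norm (\<phi> j))^2 / rr \<phi> j)"
  define R where "R = rr \<phi> (b - 1)"
  define s where "s = rr \<phi> (a - 1)"
  define L where "L = ln R - ln s"
  have rpos: "rr \<phi> j > 0" for j using rr_ge1[of \<phi> j] by linarith
  have e0: "e j \<ge> 0" for j unfolding e_def using rpos[of j] by simp
  have E0: "E \<ge> 0" unfolding E_def using e0 by (simp add: sum_nonneg)
  have Lg0: "Lg \<ge> 0" unfolding Lg_def using rpos by (intro sum_nonneg divide_nonneg_pos) auto
  have pt: "(\<phi> i \<bullet> x b)^2 \<le> 2 * R * e i + 2 * ((norm (\<phi> i))^2 * E * Lg)" if i: "i \<in> {a..<b}" for i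
  proof -
    define \<sigma> where "\<sigma> = (\<Sum>j\<in>{i..<b}. (p j / rr \<phi> j) * (\<phi> i \<bullet> \<phi> j))"
    have "x i - x b = (\<Sum>j\<in>{i..<b}. ((\<phi> j \<bullet> x j) / rr \<phi> j) *\<^sub>R \<phi> j)"
      using telescope[OF xrec, of i b] i by simp
    then have xb: "x b = x i - (\<Sum>j\<in>{i..<b}. ((\<phi> j \<bullet> x j) / rr \<phi> j) *\<^sub>R \<phi> j)" by (simp add: algebra_simps)
    have dot: "\<phi> i \<bullet> x b = p i - \<sigma>"
      unfolding xb \<sigma>_def p_def by (simp add: inner_diff_right inner_sum_right)
    define aa where "aa j = \<bar>p j\<bar> / sqrt (rr \<phi> j)" for j
    define bb where "bb j = norm (\<phi> j) / sqrt (rr \<phi> j)" for j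
    have trm: "\<bar>(p j / rr \<phi> j) * (\<phi> i \<bullet> \<phi> j)\<bar> \<le> norm (\<phi> i) * (aa j * bb j)" for j
    proof -
      have "\<bar>(p j / rr \<phi> j) * (\<phi> i \<bullet> \<phi> j)\<bar> = \<bar>p j\<bar> / rr \<phi> j * \<bar>\<phi> i \<bullet> \<phi> j\<bar>"
        using rpos[of j] by (simp add: abs_mult)
      also have "\<dots> \<le> \<bar>p j\<bar> / rr \<phi> j * (norm (\<phi> i) * norm (\<phi> j))"
        using rpos[of j] by (intro mult_left_mono Cauchy_Schwarz_ineq2) auto
      also have "\<dots> = norm (\<phi> i) * (aa j * bb j)"
        unfolding aa_def bb_def using rpos[of j] by (simp add: field_simps)
      finally show ?thesis .
    qed
    have "\<bar>\<sigma>\<bar> \<le> (\<Sum>j\<in>{i..<b}. norm (\<phi> i) * (aa j * bb j))"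
      unfolding \<sigma>_def by (rule order_trans[OF sum_abs sum_mono]) (rule trm)
    also have "\<dots> = norm (\<phi> i) * (\<Sum>j\<in>{i..<b}. aa j * bb j)" by (simp add: sum_distrib_left)
    finally have sabs: "\<bar>\<sigma>\<bar> \<le> norm (\<phi> i) * (\<Sum>j\<in>{i..<b}. aa j * bb j)" .
    have "\<sigma>^2 = \<bar>\<sigma>\<bar>^2" by simp
    also have "\<dots> \<le> (norm (\<phi> i) * (\<Sum>j\<in>{i..<b}. aa j * bb j))^2"
      using sabs by (intro power_mono) auto
    also have "\<dots> = (norm (\<phi> i))^2 * (\<Sum>j\<in>{i..<b}. aa j * bb j)^2" by (simp add: power_mult_distrib)
    also have "\<dots> \<le> (norm (\<phi> i))^2 * ((\<Sum>j\<in>{i..<b}. (aa j)^2) * (\<Sum>j\<in>{i..<b}. (bb j)^2))"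
      by (intro mult_left_mono Cauchy_Schwarz_ineq_sum) auto
    also have "(\<Sum>j\<in>{i..<b}. (aa j)^2) = (\<Sum>j\<in>{i..<b}. e j)"
      unfolding aa_def e_def using rpos by (intro sum.cong) (auto simp: power_divide less_imp_le)
    also have "(\<Sum>j\<in>{i..<b}. (bb j)^2) = (\<Sum>j\<in>{i..<b}. (norm (\<phi> j))^2 / rr \<phi> j)"
      unfolding bb_def using rpos by (intro sum.cong) (auto simp: power_divide less_imp_le)
    finally have cs: "\<sigma>^2 \<le> (norm (\<phi> i))^2 * ((\<Sum>j\<in>{i..<b}. e j) * (\<Sum>j\<in>{i..<b}. (norm (\<phi> j))^2 / rr \<phi> j))" .
    have E1: "(\<Sum>j\<in>{i..<b}. e j) \<le> E"
      unfolding E_def using i e0 by (intro sum_mono2) auto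
    have L1: "(\<Sum>j\<in>{i..<b}. (norm (\<phi> j))^2 / rr \<phi> j) \<le> Lg"
      unfolding Lg_def using i rpos by (intro sum_mono2) (auto intro: divide_nonneg_pos)
    have E2: "(\<Sum>j\<in>{i..<b}. e j) \<ge> 0" using e0 by (simp add: sum_nonneg)
    have L2: "(\<Sum>j\<in>{i..<b}. (norm (\<phi> j))^2 / rr \<phi> j) \<ge> 0"
      using rpos by (intro sum_nonneg divide_nonneg_pos) auto
    have "(\<Sum>j\<in>{i..<b}. e j) * (\<Sum>j\<in>{i..<b}. (norm (\<phi> j))^2 / rr \<phi> j) \<le> E * Lg"
      using E1 L1 E2 L2 E0 by (intro mult_mono) auto
    then have s2: "\<sigma>^2 \<le> (norm (\<phi> i))^2 * (E * Lg)"
      using cs by (meson mult_left_mono order_trans zero_le_power2)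
    have "(p i)^2 = rr \<phi> i * e i" unfolding e_def using rpos[of i] by simp
    also have "\<dots> \<le> R * e i" unfolding R_def using i e0[of i] by (intro mult_right_mono rr_mono) auto
    finally have pR: "(p i)^2 \<le> R * e i" .
    have "(p i - \<sigma>)^2 \<le> 2 * (p i)^2 + 2 * \<sigma>^2"
      using zero_le_power2[of "p i + \<sigma>"] unfolding power2_diff power2_sum by linarith
    then show ?thesis using dot pR s2 by (simp add: mult.assoc)
  qed
  have "(\<Sum>i\<in>{a..<b}. (\<phi> i \<bullet> x b)^2) \<le> (\<Sum>i\<in>{a..<b}. 2 * R * e i + 2 * ((norm (\<phi> i))^2 * E * Lg))"
    using pt by (rule sum_mono)
  also have "\<dots> = (\<Sum>i\<in>{a..<b}. (2 * R) * e i + (2 * E * Lg) * (norm (\<phi> i))^2)"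
    by (rule sum.cong) (simp_all add: algebra_simps)
  also have "\<dots> = (2 * R) * (\<Sum>i\<in>{a..<b}. e i) + (2 * E * Lg) * (\<Sum>i\<in>{a..<b}. (norm (\<phi> i))^2)"
    by (simp only: sum.distrib sum_distrib_left)
  also have "\<dots> = 2 * R * E + 2 * E * Lg * (R - s)"
    using sum_norm_rr[OF a ab, of \<phi>] unfolding E_def R_def s_def by simp
  finally have tot: "(\<Sum>i\<in>{a..<b}. (\<phi> i \<bullet> x b)^2) \<le> 2 * R * E + 2 * E * Lg * (R - s)" .
  have s1: "s \<ge> 1" and R1: "R \<ge> s" unfolding s_def R_def using rr_ge1 ab a by (auto intro: rr_mono)
  have LgL: "Lg \<le> L" unfolding Lg_def L_def R_def s_def by (rule sum_log_rr[OF a ab])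
  have L0: "L \<ge> 0" unfolding L_def using s1 R1 by simp
  have "ln (s / R) \<le> s / R - 1" using s1 R1 by (intro ln_le_minus_one) auto
  then have "ln s - ln R \<le> s / R - 1" using s1 R1 by (simp add: ln_div)
  then have "R * (ln s - ln R) \<le> R * (s / R - 1)" using s1 R1 by (intro mult_left_mono) auto
  moreover have "R * (s / R - 1) = s - R" using s1 R1 by (simp add: field_simps)
  ultimately have RsL: "R - s \<le> R * L" unfolding L_def by (simp add: algebra_simps)
  have "Lg * (R - s) \<le> L * R" using LgL Lg0 R1 s1 L0 by (intro mult_mono) auto
  then have h1: "Lg * (R - s) \<le> R * L + s" using s1 by (simp add: mult.commute)
  have "2 * E * (Lg * (R - s)) \<le> 2 * E * (R * L + s)" using E0 h1 by (intro mult_left_mono) auto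
  then have "2 * E * Lg * (R - s) \<le> 2 * E * (R * L + s)" by (simp add: mult.assoc)
  moreover have h2: "R \<le> R * L + s" using RsL by linarith
  have "2 * E * R \<le> 2 * E * (R * L + s)" using E0 h2 by (intro mult_left_mono) auto
  then have "2 * R * E \<le> 2 * E * (R * L + s)" by (simp add: ac_simps)
  moreover have "4 * (R * L + s) * E = 2 * E * (R * L + s) + 2 * E * (R * L + s)" by (simp add: algebra_simps)
  ultimately have "(\<Sum>i\<in>{a..<b}. (\<phi> i \<bullet> x b)^2) \<le> 4 * (R * L + s) * E" using tot by linarith
  then show ?thesis unfolding R_def L_def s_def E_def e_def p_def .
qed

lemma sum_tele1: "(\<Sum>k=1..(K::nat). (f (k - 1) - f k :: real)) = f 0 - f K"
  by (induction K) auto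

lemma vec_conv:
  fixes \<phi> :: "nat \<Rightarrow> real^'d" and t :: "nat \<Rightarrow> nat"
  assumes mono: "strict_mono t" and t0: "t 0 \<ge> 1"
    and div: "filterlim (\<lambda>N. \<Sum>k=1..N. lambda_min (SS \<phi> t k) / DD \<phi> t k) at_top sequentially"
  shows "(\<lambda>n. trans_from \<phi> 0 n *v v) \<longlonglongrightarrow> 0"
proof (rule ccontr)
  define x where "x n = trans_from \<phi> 0 n *v v" for n
  define N where "N n = (norm (x n))^2" for n
  assume nc: "\<not> (\<lambda>n. trans_from \<phi> 0 n *v v) \<longlonglongrightarrow> 0"
  have xrec: "x (Suc n) = x n - ((\<phi> n \<bullet> x n) / rr \<phi> n) *\<^sub>R \<phi> n" for n
    unfolding x_def by (rule trans_rec)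
  have esum: "(\<Sum>j\<in>{a..<b}. (\<phi> j \<bullet> x j)^2 / rr \<phi> j) \<le> N a - N b" if "1 \<le> a" "a \<le> b" for a b
    unfolding N_def using energy_sum[OF xrec that] .
  have esum0: "(\<Sum>j\<in>{a..<b}. (\<phi> j \<bullet> x j)^2 / rr \<phi> j) \<ge> 0" for a b
    using rr_ge1[of \<phi>] by (intro sum_nonneg divide_nonneg_pos) (auto intro: less_le_trans[of 0 1])
  have Nmono: "N b \<le> N a" if "1 \<le> a" "a \<le> b" for a b
    using esum[OF that] esum0[of a b] by linarith
  have "\<exists>\<epsilon>>0. \<forall>n\<ge>1. N n \<ge> \<epsilon>"
  proof (rule ccontr)
    assume "\<not> ?thesis"
    then have small: "\<forall>\<epsilon>>0. \<exists>n\<ge>1. N n < \<epsilon>" by (auto simp: not_le)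
    have "x \<longlonglongrightarrow> 0"
    proof (rule LIMSEQ_I)
      fix r :: real assume r: "r > 0"
      obtain n where n: "n \<ge> 1" "N n < r^2" using small r by (meson zero_less_power)
      have "norm (x m - 0) < r" if "m \<ge> n" for m
      proof -
        have "(norm (x m))^2 < r^2" using Nmono[OF n(1) that] n(2) unfolding N_def by linarith
        then show ?thesis using r by (simp add: power_less_imp_less_base)
      qed
      then show "\<exists>no. \<forall>m\<ge>no. norm (x m - 0) < r" by blast
    qed
    then show False using nc unfolding x_def by simp
  qed
  then obtain \<epsilon> where eps: "\<epsilon> > 0" "\<And>n. n \<ge> 1 \<Longrightarrow> N n \<ge> \<epsilon>" by blast
  have tge: "t j \<ge> 1" for j using t0 strict_mono_mono[OF mono] by (meson le_trans monoD zero_le)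
  have tlt: "t (k - 1) < t k" if "k \<ge> 1" for k using mono that by (simp add: strict_mono_def)
  have termb: "lambda_min (SS \<phi> t k) / DD \<phi> t k \<le> 4 / \<epsilon> * (N (t (k - 1)) - N (t k))" if k: "k \<ge> 1" for k
  proof -
    define a where "a = t (k - 1)"
    define b where "b = t k"
    define E where "E = (\<Sum>j\<in>{a..<b}. (\<phi> j \<bullet> x j)^2 / rr \<phi> j)"
    define lam where "lam = lambda_min (SS \<phi> t k)"
    define D where "D = DD \<phi> t k"
    have a1: "1 \<le> a" and ab: "a \<le> b" using tge tlt[OF k] unfolding a_def b_def by (auto simp: less_imp_le)
    have b1: "1 \<le> b" using a1 ab by simp
    have EN: "E \<le> N a - N b" unfolding E_def by (rule esum[OF a1 ab])
    have E0: "E \<ge> 0" unfolding E_def by (rule esum0)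
    have s1: "rr \<phi> (a - 1) \<ge> 1" by (rule rr_ge1)
    have Rs: "rr \<phi> (a - 1) \<le> rr \<phi> (b - 1)" using ab by (intro rr_mono) simp
    have "ln (rr \<phi> (b - 1)) - ln (rr \<phi> (a - 1)) \<ge> 0" using s1 Rs by simp
    moreover have "rr \<phi> (b - 1) \<ge> 0" using rr_ge1[of \<phi> "b - 1"] by simp
    ultimately have "rr \<phi> (b - 1) * (ln (rr \<phi> (b - 1)) - ln (rr \<phi> (a - 1))) \<ge> 0"
      by (intro mult_nonneg_nonneg)
    then have D1: "D \<ge> 1" unfolding D_def DD_def a_def[symmetric] b_def[symmetric]
      using s1 by linarith
    have "lam * N b \<le> x b \<bullet> (SS \<phi> t k *v x b)"
      unfolding lam_def N_def by (rule lambda_min_le[OF SS_sym])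
    also have "\<dots> = (\<Sum>i\<in>{a..<b}. (\<phi> i \<bullet> x b)^2)" unfolding a_def b_def by (rule SS_quad)
    also have "\<dots> \<le> 4 * D * E"
      unfolding D_def DD_def E_def a_def[symmetric] b_def[symmetric] by (rule block[OF xrec a1 ab])
    finally have main: "lam * N b \<le> 4 * D * E" .
    have "lam / D \<le> 4 / \<epsilon> * E"
    proof (cases "lam \<ge> 0")
      case True
      have "lam * \<epsilon> \<le> lam * N b" using eps(2)[OF b1] True by (simp add: mult_left_mono)
      then have "lam * \<epsilon> \<le> 4 * D * E" using main by linarith
      then show ?thesis using D1 eps(1) by (simp add: field_simps)
    next
      case False
      then have "lam / D \<le> 0" using D1 by (simp add: divide_nonpos_pos)
      moreover have "4 / \<epsilon> * E \<ge> 0" using E0 eps(1) by simp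
      ultimately show ?thesis by linarith
    qed
    also have "\<dots> \<le> 4 / \<epsilon> * (N a - N b)" using EN eps(1) by (intro mult_left_mono) auto
    finally show ?thesis unfolding lam_def D_def a_def b_def .
  qed
  have bound: "(\<Sum>k=1..K. lambda_min (SS \<phi> t k) / DD \<phi> t k) \<le> 4 / \<epsilon> * N (t 0)" for K
  proof -
    have "(\<Sum>k=1..K. lambda_min (SS \<phi> t k) / DD \<phi> t k) \<le> (\<Sum>k=1..K. 4 / \<epsilon> * (N (t (k - 1)) - N (t k)))"
      by (rule sum_mono) (rule termb, simp)
    also have "\<dots> = 4 / \<epsilon> * (N (t 0) - N (t K))"
      unfolding sum_distrib_left[symmetric] using sum_tele1[of "\<lambda>k. N (t k)" K] by simp
    also have "\<dots> \<le> 4 / \<epsilon> * N (t 0)" using eps(1) unfolding N_def by (intro mult_left_mono) auto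
    finally show ?thesis .
  qed
  have "eventually (\<lambda>K. 4 / \<epsilon> * N (t 0) + 1 \<le> (\<Sum>k=1..K. lambda_min (SS \<phi> t k) / DD \<phi> t k)) sequentially"
    using div unfolding filterlim_at_top by blast
  then obtain K where "4 / \<epsilon> * N (t 0) + 1 \<le> (\<Sum>k=1..K. lambda_min (SS \<phi> t k) / DD \<phi> t k)"
    by (auto simp: eventually_sequentially)
  with bound[of K] show False by linarith
qed

theorem mainTheorem3:
  fixes \<phi> :: "nat \<Rightarrow> real^'d" and t :: "nat \<Rightarrow> nat"
  assumes "strict_mono t" and "t 0 \<ge> 1"
    and "filterlim (\<lambda>N. \<Sum>k=1..N. lambda_min (SS \<phi> t k) / DD \<phi> t k) at_top sequentially"
  shows "(\<lambda>n. Phi \<phi> n 0) \<longlonglongrightarrow> 0"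
proof (rule vec_tendstoI)
  fix i
  show "(\<lambda>n. Phi \<phi> n 0 $ i) \<longlonglongrightarrow> 0 $ i"
  proof (rule vec_tendstoI)
    fix j
    have c: "(\<lambda>n. trans_from \<phi> 0 n *v axis j 1) \<longlonglongrightarrow> 0" by (rule vec_conv[OF assms])
    have "(\<lambda>n. (trans_from \<phi> 0 n *v axis j 1) $ i) \<longlonglongrightarrow> (0::real^'d) $ i"
      by (rule tendsto_vec_nth[OF c])
    moreover have "(trans_from \<phi> 0 n *v axis j 1) $ i = Phi \<phi> n 0 $ i $ j" for n
      by (simp add: matrix_vector_mult_basis column_def Phi_def)
    ultimately show "(\<lambda>n. Phi \<phi> n 0 $ i $ j) \<longlonglongrightarrow> 0 $ i $ j" by simp
  qed
qed

end
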